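(* For integers $d\ge1$ and $s\ge0$, let $F_s^d$ be the number of lattice paths with unit steps $(1,0)$ and $(0,1)$ from $(0,0)$ to $(s+2,s)$ all of whose points other than the endpoint satisfy $x-2<y<x+d$ (the endpoint lies on $y=x-2$). Then for every $\alpha\in(0,1/2)$, $$\sum_{s=0}^\infty F_s^d\,\big(\alpha(1-\alpha)\big)^s=\frac{1}{\alpha^2}\left(1-\frac{1-2\alpha}{(1-\alpha)^2\Big(1-\big(\tfrac{\alpha}{1-\alpha}\big)^{d+2}\Big)}\right).$$ *)

theory Defs
  imports Complex_Main
begin

text \<open>A lattice path from (0,0) with unit steps is encoded as a list of steps:
  True = step (1,0), False = step (0,1).\<close>

definition lp_point :: "bool list \<Rightarrow> nat \<Rightarrow> int \<times> int" where
  "lp_point p k = (int (length (filter id (take k p))),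
                   int (length (filter Not (take k p))))"

definition F :: "nat \<Rightarrow> nat \<Rightarrow> nat" where
  "F d s = card {p :: bool list. length p = 2 * s + 2
      \<and> lp_point p (length p) = (int s + 2, int s)
      \<and> (\<forall>k < length p. fst (lp_point p k) - 2 < snd (lp_point p k)
                       \<and> snd (lp_point p k) < fst (lp_point p k) + int d)}"

end

theory Submission
  imports Defs
begin


fun okp :: "nat \<Rightarrow> int \<Rightarrow> bool list \<Rightarrow> bool" where
  "okp d j [] = (j = int d + 2)"
| "okp d j (b # l) = (1 \<le> j \<and> j \<le> int d + 1 \<and> okp d (if b then j+1 else j-1) l)"

definition cnt :: "bool list \<Rightarrow> int" where
  "cnt l = int (length (filter id l)) - int (length (filter Not l))"

lemma cnt_simps[simp]: "cnt [] = 0" "cnt (True # l) = cnt l + 1" "cnt (False # l) = cnt l - 1"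
  by (auto simp: cnt_def)

lemma okp_iff: "okp d j l \<longleftrightarrow>
   (\<forall>k<length l. 1 \<le> j + cnt (take k l) \<and> j + cnt (take k l) \<le> int d + 1) \<and> j + cnt l = int d + 2"
proof (induction l arbitrary: j)
  case Nil
  then show ?case by simp
next
  case (Cons b l)
  have e: "(\<forall>k<length (b#l). P k) \<longleftrightarrow> P 0 \<and> (\<forall>k<length l. P (Suc k))" for P
    by (auto simp: less_Suc_eq_0_disj)
  show ?case
    unfolding e using Cons[of "if b then j+1 else j-1"] by (cases b) (auto simp: algebra_simps)
qed

lemma Fset_eq:
  "{p :: bool list. length p = 2 * s + 2
      \<and> lp_point p (length p) = (int s + 2, int s)
      \<and> (\<forall>k < length p. fst (lp_point p k) - 2 < snd (lp_point p k)
                       \<and> snd (lp_point p k) < fst (lp_point p k) + int d)}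
   = {l. length l = 2 * s + 2 \<and> okp d (int d) l}" (is "?A = ?B")
proof (intro set_eqI iffI)
  fix l assume "l \<in> ?A"
  then show "l \<in> ?B" unfolding okp_iff by (auto simp: lp_point_def cnt_def)
next
  fix l assume "l \<in> ?B"
  hence len: "length l = 2*s+2" and ok: "okp d (int d) l" by auto
  have c: "length (filter id l) + length (filter Not l) = 2*s+2"
    using sum_length_filter_compl[of id l] len by (simp add: comp_def)
  from ok have "cnt l = 2" "\<forall>k<length l. 1 \<le> int d + cnt (take k l) \<and> int d + cnt (take k l) \<le> int d + 1"
    unfolding okp_iff by auto
  with c len show "l \<in> ?A" by (auto simp: lp_point_def cnt_def)
qed



fun w :: "nat \<Rightarrow> real \<Rightarrow> real \<Rightarrow> nat \<Rightarrow> int \<Rightarrow> real" where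
  "w d p q 0 j = (if j = int d + 2 then 1 else 0)"
| "w d p q (Suc n) j = (if 1 \<le> j \<and> j \<le> int d + 1 then p * w d p q n (j+1) + q * w d p q n (j-1) else 0)"

definition wt :: "real \<Rightarrow> real \<Rightarrow> bool list \<Rightarrow> real" where
  "wt p q l = p ^ length (filter id l) * q ^ length (filter Not l)"

definition A :: "nat \<Rightarrow> nat \<Rightarrow> int \<Rightarrow> bool list set" where
  "A d n j = {l. length l = n \<and> okp d j l}"

lemma finite_A: "finite (A d n j)"
proof -
  have "finite {xs :: bool list. set xs \<subseteq> UNIV \<and> length xs = n}"
    by (rule finite_lists_length_eq) simp
  then show ?thesis by (rule finite_subset[rotated]) (auto simp: A_def)
qed

lemma A_Suc: "A d (Suc n) j = (if 1 \<le> j \<and> j \<le> int d + 1 then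
    Cons True ` A d n (j+1) \<union> Cons False ` A d n (j-1) else {})"
proof (intro set_eqI iffI)
  fix l assume "l \<in> A d (Suc n) j"
  then show "l \<in> (if 1 \<le> j \<and> j \<le> int d + 1 then
    Cons True ` A d n (j+1) \<union> Cons False ` A d n (j-1) else {})"
    by (cases l) (auto simp: A_def split: if_splits)
next
  fix l assume "l \<in> (if 1 \<le> j \<and> j \<le> int d + 1 then
    Cons True ` A d n (j+1) \<union> Cons False ` A d n (j-1) else {})"
  then show "l \<in> A d (Suc n) j" by (auto simp: A_def split: if_splits)
qed

lemma w_sum: "w d p q n j = (\<Sum>l\<in>A d n j. wt p q l)"
proof (induction n arbitrary: j)
  case 0
  have "A d 0 j = (if j = int d + 2 then {[]} else {})" by (auto simp: A_def)
  then show ?case by (simp add: wt_def)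
next
  case (Suc n)
  show ?case
  proof (cases "1 \<le> j \<and> j \<le> int d + 1")
    case True
    have disj: "Cons True ` A d n (j+1) \<inter> Cons False ` A d n (j-1) = {}" by auto
    have "(\<Sum>l\<in>A d (Suc n) j. wt p q l) =
      (\<Sum>l\<in>Cons True ` A d n (j+1). wt p q l) + (\<Sum>l\<in>Cons False ` A d n (j-1). wt p q l)"
      unfolding A_Suc using True disj finite_A by (simp add: sum.union_disjoint)
    also have "\<dots> = p * w d p q n (j+1) + q * w d p q n (j-1)"
      by (simp add: sum.reindex Suc wt_def sum_distrib_left mult_ac)
    finally show ?thesis using True by simp
  next
    case False
    then show ?thesis by (simp only: A_Suc if_False w.simps) simp
  qed
qed

lemma A_cnt: "l \<in> A d n (int d) \<Longrightarrow> cnt l = 2 \<and> length (filter id l) + length (filter Not l) = n"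
  using sum_length_filter_compl[of id l] unfolding A_def okp_iff by (auto simp: comp_def)

lemma w_odd: "w d p q (Suc (2*s)) (int d) = 0"
proof -
  have "A d (Suc (2*s)) (int d) = {}"
  proof (rule ccontr)
    assume "A d (Suc (2*s)) (int d) \<noteq> {}"
    then obtain l where "l \<in> A d (Suc (2*s)) (int d)" by blast
    from A_cnt[OF this] show False unfolding cnt_def by presburger
  qed
  then show ?thesis by (simp add: w_sum)
qed

lemma w_even: "w d p q (2*s+2) (int d) = real (F d s) * p^(s+2) * q^s"
proof -
  have "w d p q (2*s+2) (int d) = (\<Sum>l\<in>A d (2*s+2) (int d). p^(s+2) * q^s)"
    unfolding w_sum
  proof (rule sum.cong)
    fix l assume "l \<in> A d (2*s+2) (int d)"
    from A_cnt[OF this] have "length (filter id l) = s+2" "length (filter Not l) = s"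
      unfolding cnt_def by linarith+
    then show "wt p q l = p^(s+2) * q^s" by (simp add: wt_def)
  qed simp
  also have "A d (2*s+2) (int d) = {p :: bool list. length p = 2 * s + 2
      \<and> lp_point p (length p) = (int s + 2, int s)
      \<and> (\<forall>k < length p. fst (lp_point p k) - 2 < snd (lp_point p k)
                       \<and> snd (lp_point p k) < fst (lp_point p k) + int d)}"
    unfolding Fset_eq A_def by simp
  finally show ?thesis by (simp add: F_def)
qed

lemma w_notrange: assumes "n \<notin> range (\<lambda>s::nat. 2*s+2)" shows "w d p q n (int d) = 0"
proof -
    have "n = 0 \<or> (\<exists>s. n = Suc (2*s)) \<or> (\<exists>s. n = 2*s+2)"
    proof (cases "even n")
      case True
      then obtain m where m: "n = 2*m" by (rule evenE)
      show ?thesis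
      proof (cases m)
        case 0 then show ?thesis using m by simp
      next
        case (Suc m') then have "n = 2*m'+2" using m by simp
        then show ?thesis by blast
      qed
    next
      case False
      then obtain m where "n = 2*m+1" by (rule oddE)
      then have "n = Suc (2*m)" by simp
      then show ?thesis by blast
    qed
    then show ?thesis
    proof (elim disjE exE)
      assume "n = 0" then show ?thesis by simp
    next
      fix s assume ns: "n = Suc (2*s)" show ?thesis unfolding ns by (rule w_odd)
    next
      fix s assume "n = 2*s+2" then have "n \<in> range (\<lambda>s::nat. 2*s+2)" by blast
      then show ?thesis using assms by blast
    qed
qed



definition U :: "nat \<Rightarrow> real \<Rightarrow> int \<Rightarrow> real" where
  "U d r j = (1 - r ^ nat j) / (1 - r ^ (d+2))"

context
  fixes d :: nat and p q r :: real
  assumes q0: "0 < q" and qp: "q < p" and pq1: "p + q = 1" and rdef: "r = q / p"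
begin

lemma p0: "0 < p" using q0 qp by simp
lemma r0: "0 < r" using q0 p0 rdef by simp
lemma r1: "r < 1" using qp p0 rdef by simp
lemma den_pos: "0 < 1 - r ^ (d+2)"
  using power_strict_mono[of r 1 "d+2"] r0 r1 by simp

lemma U_nonneg: "0 \<le> U d r j"
  unfolding U_def using den_pos r0 r1 by (simp add: power_le_one)

lemma U_harm: assumes "1 \<le> j" shows "p * U d r (j+1) + q * U d r (j-1) = U d r j"
proof -
  obtain m where m: "nat j = Suc m" using assms by (cases "nat j") auto
  have n1: "nat (j+1) = Suc (Suc m)" "nat (j-1) = m" using m assms by auto
  have key: "p * r^(Suc (Suc m)) + q * r^m = r^(Suc m)"
  proof -
    have pr: "p * r = q" using rdef p0 by simp
    have "p * r^(Suc (Suc m)) + q * r^m = r^m * ((p*r)*r + q)" by (simp add: algebra_simps)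
    also have "(p*r)*r + q = r * (p + q)" using pr by (simp add: algebra_simps)
    also have "\<dots> = r" using pq1 by simp
    finally show ?thesis by simp
  qed
  have "p * (1 - r^(Suc (Suc m))) + q * (1 - r^m) = 1 - r^(Suc m)"
    using key pq1 by (simp add: algebra_simps)
  then show ?thesis unfolding U_def n1 m using den_pos
    by (simp add: diff_divide_distrib[symmetric] add_divide_distrib[symmetric] mult.commute)
qed

lemma w_nonneg: "0 \<le> w d p q n j"
  using p0 q0 by (induction n arbitrary: j) auto

lemma w_Suc_sum: "(\<Sum>n<N. w d p q (Suc n) j) =
   (if 1 \<le> j \<and> j \<le> int d + 1 then p * (\<Sum>n<N. w d p q n (j+1)) + q * (\<Sum>n<N. w d p q n (j-1)) else 0)"
  by (cases "1 \<le> j \<and> j \<le> int d + 1") (auto simp add: sum.distrib sum_distrib_left)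

lemma S_bound: "0 \<le> j \<Longrightarrow> j \<le> int d + 2 \<Longrightarrow> (\<Sum>n<N. w d p q n j) \<le> U d r j"
proof (induction N arbitrary: j)
  case 0
  then show ?case using U_nonneg by simp
next
  case (Suc N)
  have e: "(\<Sum>n<Suc N. w d p q n j) = w d p q 0 j + (\<Sum>n<N. w d p q (Suc n) j)"
    by (rule sum.lessThan_Suc_shift)
  show ?case
  proof (cases "1 \<le> j \<and> j \<le> int d + 1")
    case True
    have "(\<Sum>n<Suc N. w d p q n j) = p * (\<Sum>n<N. w d p q n (j+1)) + q * (\<Sum>n<N. w d p q n (j-1))"
      unfolding e w_Suc_sum using True by simp
    also have "\<dots> \<le> p * U d r (j+1) + q * U d r (j-1)"
      using Suc.IH[of "j+1"] Suc.IH[of "j-1"] True p0 q0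
      by (intro add_mono mult_left_mono) auto
    also have "\<dots> = U d r j" using U_harm True by simp
    finally show ?thesis .
  next
    case False
    then have "j = 0 \<or> j = int d + 2" using Suc.prems by auto
    then show ?thesis
    proof
      assume "j = 0" then show ?thesis unfolding e w_Suc_sum by (simp add: U_def)
    next
      assume j: "j = int d + 2"
      have "nat j = d+2" using j by simp
      then have "U d r j = 1" unfolding U_def using den_pos by simp
      then show ?thesis unfolding e w_Suc_sum using j by simp
    qed
  qed
qed

lemma w_zero_out: "\<not> (0 \<le> j \<and> j \<le> int d + 2) \<Longrightarrow> w d p q n j = 0"
  by (cases n) auto

lemma w_summable: "summable (\<lambda>n. w d p q n j)"
proof (cases "0 \<le> j \<and> j \<le> int d + 2")
  case True
  show ?thesis by (rule summableI_nonneg_bounded[OF w_nonneg S_bound]) (use True in auto)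
next
  case False
  then show ?thesis using w_zero_out by simp
qed

definition L :: "int \<Rightarrow> real" where "L j = suminf (\<lambda>n. w d p q n j)"

lemma L_harm: assumes "1 \<le> j" "j \<le> int d + 1"
  shows "L j = p * L (j+1) + q * L (j-1)"
proof -
  have "(\<lambda>n. p * w d p q n (j+1) + q * w d p q n (j-1)) sums (p * L (j+1) + q * L (j-1))"
    unfolding L_def by (intro sums_add sums_mult summable_sums w_summable)
  then have "(\<lambda>n. w d p q (Suc n) j) sums (p * L (j+1) + q * L (j-1))" using assms by simp
  then have "(\<lambda>n. w d p q n j) sums (p * L (j+1) + q * L (j-1) + w d p q 0 j)"
    by (rule iffD1[OF sums_Suc_iff])
  moreover have "w d p q 0 j = 0" using assms by simp
  ultimately show ?thesis unfolding L_def by (simp add: sums_iff)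
qed

lemma L_top: "L (int d + 2) = 1"
proof -
  have "(\<lambda>n. w d p q (Suc n) (int d + 2)) sums 0" by simp
  then have "(\<lambda>n. w d p q n (int d + 2)) sums (0 + w d p q 0 (int d + 2))" by (rule iffD1[OF sums_Suc_iff])
  then have "(\<lambda>n. w d p q n (int d + 2)) sums 1" by simp
  then show ?thesis unfolding L_def by (simp add: sums_iff)
qed

lemma L_bot: "L 0 = 0"
proof -
  have "(\<lambda>n. w d p q n 0) = (\<lambda>n. 0)" by (rule ext) (case_tac n, auto)
  then show ?thesis unfolding L_def by simp
qed

lemma L_eq_U: "L (int d) = U d r (int d)"
proof -
  define E where "E k = L (int k) - U d r (int k)" for k :: nat
  have E0: "E 0 = 0" unfolding E_def U_def using L_bot by simp
  have Etop: "E (d+2) = 0"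
  proof -
    have nn: "nat (int (d+2)) = d+2" by (simp only: nat_int)
    have "U d r (int (d+2)) = 1" unfolding U_def nn using den_pos by simp
    then show ?thesis unfolding E_def using L_top by (simp add: ac_simps)
  qed
  have Eh: "E k = p * E (Suc k) + q * E (k - 1)" if "1 \<le> k" "k \<le> d+1" for k
  proof -
    have "int (k-1) = int k - 1" "int (Suc k) = int k + 1" using that by auto
    then show ?thesis unfolding E_def
      using L_harm[of "int k"] U_harm[of "int k"] that by (simp add: algebra_simps)
  qed
  have D: "k \<le> d+1 \<Longrightarrow> E (Suc k) - E k = r^k * E 1" for k
  proof (induction k)
    case 0 then show ?case using E0 by simp
  next
    case (Suc k)
    have "E (Suc k) = p * E (Suc (Suc k)) + q * E k" using Eh[of "Suc k"] Suc.prems by simp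
    then have "p * E (Suc (Suc k)) + q * E k = (p + q) * E (Suc k)" using pq1 by simp
    then have "p * (E (Suc (Suc k)) - E (Suc k)) = q * (E (Suc k) - E k)"
      by (simp add: algebra_simps)
    moreover have qpr: "q = p * r" using p0 rdef by simp
    ultimately have "p * (E (Suc (Suc k)) - E (Suc k)) = p * (r * (E (Suc k) - E k))"
      by (simp add: mult.assoc)
    then have "E (Suc (Suc k)) - E (Suc k) = r * (E (Suc k) - E k)"
      using p0 by simp
    then show ?case using Suc by simp
  qed
  have Es: "k \<le> d+2 \<Longrightarrow> E k = E 1 * (\<Sum>i<k. r^i)" for k
  proof (induction k)
    case 0 then show ?case using E0 by simp
  next
    case (Suc k)
    then show ?case using D[of k] by (simp add: algebra_simps)
  qed
  have pos: "0 < (\<Sum>i<d+2. r^i)"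
  proof -
    have "(\<Sum>i<Suc (d+1). r^i) = r^0 + (\<Sum>i<d+1. r^(Suc i))"
      by (rule sum.lessThan_Suc_shift)
    then have "(\<Sum>i<d+2. r^i) = 1 + (\<Sum>i<d+1. r^(Suc i))" by simp
    moreover have "0 \<le> (\<Sum>i<d+1. r^(Suc i))" using r0 by (intro sum_nonneg) simp
    ultimately show ?thesis by simp
  qed
  have "E 1 = 0" using Es[of "d+2"] Etop pos by simp
  then have "E d = 0" using Es[of d] by simp
  then show ?thesis unfolding E_def by simp
qed

lemma main_sums: "(\<lambda>s. real (F d s) * (p * q) ^ s) sums (U d r (int d) / p^2)"
proof -
  have "(\<lambda>n. w d p q n (int d)) sums L (int d)" unfolding L_def by (rule summable_sums[OF w_summable])
  then have S: "(\<lambda>n. w d p q n (int d)) sums U d r (int d)" using L_eq_U by simp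
  have sm: "strict_mono (\<lambda>s::nat. 2*s+2)" by (rule strict_monoI) simp
  have "(\<lambda>s. w d p q (2*s+2) (int d)) sums U d r (int d) \<longleftrightarrow> (\<lambda>n. w d p q n (int d)) sums U d r (int d)"
    by (rule sums_mono_reindex[OF sm w_notrange])
  with S have "(\<lambda>s. w d p q (2*s+2) (int d)) sums U d r (int d)" by blast
  then have "(\<lambda>s. w d p q (2*s+2) (int d) / p^2) sums (U d r (int d) / p^2)"
    by (rule sums_divide)
  moreover have "w d p q (2*s+2) (int d) / p^2 = real (F d s) * (p * q) ^ s" for s
  proof -
    have "p^(s+2) * q^s / p^2 = (p*q)^s" using p0 by (simp add: power_add power_mult_distrib power2_eq_square)
    then have "real (F d s) * (p^(s+2) * q^s / p^2) = real (F d s) * (p*q)^s" by simp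
    then show ?thesis unfolding w_even by (simp only: mult.assoc times_divide_eq_right)
  qed
  ultimately show ?thesis by simp
qed

end


theorem lemma4:
  fixes d :: nat and \<alpha> :: real
  assumes "d \<ge> 1" and "0 < \<alpha>" and "\<alpha> < 1/2"
  shows "(\<lambda>s. real (F d s) * (\<alpha> * (1 - \<alpha>)) ^ s) sums
           ((1 / \<alpha>\<^sup>2) * (1 - (1 - 2 * \<alpha>) /
              ((1 - \<alpha>)\<^sup>2 * (1 - (\<alpha> / (1 - \<alpha>)) ^ (d + 2)))))"
proof -
  define r where "r = \<alpha> / (1 - \<alpha>)"
  have a0: "0 < \<alpha>" and a1: "\<alpha> < 1 - \<alpha>" using assms by auto
  have MS: "(\<lambda>s. real (F d s) * ((1 - \<alpha>) * \<alpha>) ^ s) sums (U d r (int d) / (1 - \<alpha>)^2)"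
    by (rule main_sums[of \<alpha> "1 - \<alpha>" r d]) (use a0 a1 r_def in auto)
  have den: "0 < 1 - r ^ (d+2)" by (rule den_pos[of \<alpha> "1 - \<alpha>" r d]) (use a0 a1 r_def in auto)
  define R where "R = r ^ d"
  have rr: "r ^ (d+2) = R * \<alpha>^2 / (1-\<alpha>)^2" unfolding R_def r_def by (simp add: power_add power_divide power2_eq_square mult_ac)
  have b0: "1 - \<alpha> \<noteq> 0" using a1 a0 by simp
  have X0: "0 < 1 - R * \<alpha>^2 / (1-\<alpha>)^2" using den unfolding rr .
  have X: "1 - R * \<alpha>^2 / (1-\<alpha>)^2 \<noteq> 0" using X0 by linarith
  have X2e: "(1-\<alpha>)^2 - R * \<alpha>^2 = (1-\<alpha>)^2 * (1 - R * \<alpha>^2 / (1-\<alpha>)^2)"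
    using b0 by (simp add: field_simps)
  have "0 < (1-\<alpha>)^2 * (1 - R * \<alpha>^2 / (1-\<alpha>)^2)" using X0 b0 by simp
  then have X2: "(1-\<alpha>)^2 - R * \<alpha>^2 \<noteq> 0" using X2e by linarith
  have "U d r (int d) / (1 - \<alpha>)^2 = (1 - R) / ((1 - \<alpha>)^2 * (1 - R * \<alpha>^2 / (1-\<alpha>)^2))"
    unfolding U_def R_def rr[unfolded R_def] by simp
  also have "\<dots> = (1 / \<alpha>\<^sup>2) * (1 - (1 - 2 * \<alpha>) /
              ((1 - \<alpha>)\<^sup>2 * (1 - R * \<alpha>^2 / (1-\<alpha>)^2)))"
  proof -
    define Y where "Y = (1-\<alpha>)^2 - R * \<alpha>^2"
    have Y0: "Y \<noteq> 0" using X2 Y_def by simp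
    have e1: "(1-\<alpha>)^2 * (1 - R * \<alpha>^2 / (1-\<alpha>)^2) = Y" using X2e Y_def by simp
    have e3: "Y - (1 - 2*\<alpha>) = \<alpha>^2 * (1 - R)" unfolding Y_def by (simp add: power2_eq_square algebra_simps)
    have e2: "1 - (1 - 2*\<alpha>) / Y = \<alpha>^2 * (1 - R) / Y"
    proof -
      have "(Y - (1 - 2*\<alpha>)) / Y = 1 - (1 - 2*\<alpha>) / Y" using Y0 by (simp add: diff_divide_distrib)
      then show ?thesis using e3 by simp
    qed
    show ?thesis unfolding e1 e2 using a0 by simp
  qed
  finally have "U d r (int d) / (1 - \<alpha>)^2 = (1 / \<alpha>\<^sup>2) * (1 - (1 - 2 * \<alpha>) /
              ((1 - \<alpha>)\<^sup>2 * (1 - (\<alpha> / (1 - \<alpha>)) ^ (d + 2))))"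
    using rr unfolding r_def by simp
  with MS show ?thesis by (simp add: mult.commute)
qed

end
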